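(* The set $\{\operatorname{is}(X): X\in\mathfrak U\}$ is dense in the space of isometry types of compact ultrametric spaces endowed with the Gromov–Hausdorff metric $d_{GH}$.
   Context: $\operatorname{Sp}(X)=\{d(x,y):x\neq y\}$; $\mathfrak U$ is the class of finite ultrametric spaces $X$ with $|\operatorname{Sp}(X)|=|X|-1$. $\operatorname{is}(X)$ denotes the isometry type (class of all metric spaces isometric to $X$). For bounded metric spaces $X,Y$ and $\varepsilon>0$, $d_{GH}(\operatorname{is}(X),\operatorname{is}(Y))<\varepsilon$ iff there is a metric space $(Z,d_Z)$ with subspaces $X',Y'$ isometric to $X,Y$ such that $X'\subseteq\bigcup_{y\in Y'}O_\varepsilon(y)$ and $Y'\subseteq\bigcup_{x\in X'}O_\varepsilon(x)$, where $O_\varepsilon(t)=\{z\in Z:d_Z(t,z)<\varepsilon\}$; $d_{GH}$ is a metric on isometry types of compact metric spaces. *)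

theory Defs
  imports "HOL-Analysis.Analysis"
begin

definition ultrametric_space :: "'a set \<Rightarrow> ('a \<Rightarrow> 'a \<Rightarrow> real) \<Rightarrow> bool" where
  "ultrametric_space M d \<longleftrightarrow> Metric_space M d \<and>
     (\<forall>x\<in>M. \<forall>y\<in>M. \<forall>z\<in>M. d x z \<le> max (d x y) (d y z))"

definition Sp :: "'a set \<Rightarrow> ('a \<Rightarrow> 'a \<Rightarrow> real) \<Rightarrow> real set" where
  "Sp M d = {d x y | x y. x \<in> M \<and> y \<in> M \<and> x \<noteq> y}"

definition in_U :: "'a set \<Rightarrow> ('a \<Rightarrow> 'a \<Rightarrow> real) \<Rightarrow> bool" where
  "in_U M d \<longleftrightarrow> ultrametric_space M d \<and> finite M \<and> M \<noteq> {} \<and> card (Sp M d) + 1 = card M"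

definition isometric_spaces ::
  "'a set \<Rightarrow> ('a \<Rightarrow> 'a \<Rightarrow> real) \<Rightarrow> 'b set \<Rightarrow> ('b \<Rightarrow> 'b \<Rightarrow> real) \<Rightarrow> bool" where
  "isometric_spaces M d M' d' \<longleftrightarrow>
     (\<exists>f. bij_betw f M M' \<and> (\<forall>x\<in>M. \<forall>y\<in>M. d' (f x) (f y) = d x y))"

text \<open>d_GH(is X, is Y) < eps, via the characterization in the paper; the ambient
  space Z is taken on the type 'a + 'b (big enough to contain any X' \<union> Y').\<close>
definition GH_less ::
  "'a set \<Rightarrow> ('a \<Rightarrow> 'a \<Rightarrow> real) \<Rightarrow> 'b set \<Rightarrow> ('b \<Rightarrow> 'b \<Rightarrow> real) \<Rightarrow> real \<Rightarrow> bool" where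
  "GH_less X dX Y dY eps \<longleftrightarrow>
     (\<exists>(Z :: ('a + 'b) set) dZ X' Y'. Metric_space Z dZ \<and> X' \<subseteq> Z \<and> Y' \<subseteq> Z \<and>
        isometric_spaces X dX X' dZ \<and> isometric_spaces Y dY Y' dZ \<and>
        (\<forall>x\<in>X'. \<exists>y\<in>Y'. dZ y x < eps) \<and> (\<forall>y\<in>Y'. \<exists>x\<in>X'. dZ x y < eps))"

end

theory Submission imports Defs begin

lemma ultra_nonneg: "ultrametric_space M d \<Longrightarrow> 0 \<le> d x y"
  unfolding ultrametric_space_def by (meson Metric_space.nonneg)
lemma ultra_commute: "ultrametric_space M d \<Longrightarrow> d x y = d y x"
  unfolding ultrametric_space_def by (meson Metric_space.commute)
lemma ultra_zero: "ultrametric_space M d \<Longrightarrow> x \<in> M \<Longrightarrow> y \<in> M \<Longrightarrow> d x y = 0 \<longleftrightarrow> x = y"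
  unfolding ultrametric_space_def by (meson Metric_space.zero)
lemma ultra_ineq: "ultrametric_space M d \<Longrightarrow> x \<in> M \<Longrightarrow> y \<in> M \<Longrightarrow> z \<in> M \<Longrightarrow> d x z \<le> max (d x y) (d y z)"
  unfolding ultrametric_space_def by blast

lemma ultraI:
  assumes "\<And>x y. 0 \<le> d x y" "\<And>x y. d x y = d y x"
    "\<And>x y. x \<in> M \<Longrightarrow> y \<in> M \<Longrightarrow> d x y = 0 \<longleftrightarrow> x = y"
    "\<And>x y z. x \<in> M \<Longrightarrow> y \<in> M \<Longrightarrow> z \<in> M \<Longrightarrow> d x z \<le> max (d x y) (d y z)"
  shows "ultrametric_space M d"
proof -
  have "Metric_space M d"
  proof
    fix x y z assume "x \<in> M" "y \<in> M" "z \<in> M"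
    then have "d x z \<le> max (d x y) (d y z)" by (rule assms(4))
    moreover have "0 \<le> d x y" "0 \<le> d y z" by (rule assms(1))+
    ultimately show "d x z \<le> d x y + d y z" by linarith
  qed (use assms in auto)
  then show ?thesis unfolding ultrametric_space_def using assms(4) by blast
qed

lemma ultra_subset: "ultrametric_space M d \<Longrightarrow> N \<subseteq> M \<Longrightarrow> ultrametric_space N d"
proof (rule ultraI)
  assume a: "ultrametric_space M d" "N \<subseteq> M"
  fix x y z
  show "0 \<le> d x y" using a(1) by (rule ultra_nonneg)
  show "d x y = d y x" using a(1) by (rule ultra_commute)
  show "d x y = 0 \<longleftrightarrow> x = y" if "x \<in> N" "y \<in> N" using a that ultra_zero[of M d x y] by blast
  show "d x z \<le> max (d x y) (d y z)" if "x \<in> N" "y \<in> N" "z \<in> N" using a that ultra_ineq[of M d x y z] by blast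
qed

lemma Sp_finite: "finite M \<Longrightarrow> finite (Sp M d)"
proof -
  assume "finite M"
  have "Sp M d \<subseteq> (\<lambda>p. d (fst p) (snd p)) ` (M \<times> M)" unfolding Sp_def by force
  moreover have "finite ((\<lambda>p. d (fst p) (snd p)) ` (M \<times> M))" using \<open>finite M\<close> by simp
  ultimately show ?thesis using finite_subset by blast
qed

lemma avoid: "finite (A::real set) \<Longrightarrow> a < b \<Longrightarrow> \<exists>t. a \<le> t \<and> t \<le> b \<and> t \<notin> A"
proof -
  assume "finite A" "a < b"
  then have "\<not> {a..b} \<subseteq> A" using infinite_Icc finite_subset by blast
  then show ?thesis by auto
qed

lemma perturb:
  assumes "finite S" "S \<noteq> {}" "ultrametric_space S d" "\<delta> > 0"
  shows "\<exists>d'. ultrametric_space S d' \<and> card (Sp S d') + 1 = card S \<and>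
     (\<forall>a\<in>S. \<forall>b\<in>S. a \<noteq> b \<longrightarrow> d a b \<le> d' a b \<and> d' a b \<le> d a b + \<delta>)"
  using assms(1,2,3)
proof (induction S rule: finite_ne_induct)
  case (singleton x)
  have "ultrametric_space {x} (\<lambda>_ _. 0)" by (rule ultraI) auto
  moreover have "Sp {x} (\<lambda>_ _. 0) = {}" unfolding Sp_def by auto
  ultimately show ?case by (intro exI[of _ "\<lambda>_ _. 0"]) simp
next
  case (insert x F)
  note Ud = insert.prems
  have "ultrametric_space F d" using Ud by (rule ultra_subset) auto
  then obtain d' where d': "ultrametric_space F d'" "card (Sp F d') + 1 = card F"
    "\<And>a b. a\<in>F \<Longrightarrow> b\<in>F \<Longrightarrow> a \<noteq> b \<Longrightarrow> d a b \<le> d' a b \<and> d' a b \<le> d a b + \<delta>"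
    using insert.IH by blast
  obtain q where q: "q \<in> F" "\<And>i. i\<in>F \<Longrightarrow> d x q \<le> d x i"
  proof -
    have "Min ((d x) ` F) \<in> (d x) ` F" using insert.hyps(1,2) by simp
    then obtain q where "q \<in> F" "d x q = Min ((d x) ` F)" by auto
    moreover have "\<And>i. i\<in>F \<Longrightarrow> Min ((d x) ` F) \<le> d x i" using insert.hyps(1) by simp
    ultimately show ?thesis using that by metis
  qed
  have xF: "x \<notin> F" by (rule insert.hyps(3))
  define m where "m = d x q"
  have mpos: "m > 0"
  proof -
    have "m \<ge> 0" unfolding m_def using Ud by (rule ultra_nonneg)
    moreover have "m \<noteq> 0" unfolding m_def using ultra_zero[OF Ud, of x q] q(1) xF by auto
    ultimately show ?thesis by simp
  qed
  obtain m' where m': "m \<le> m'" "m' \<le> m + \<delta>" "m' \<notin> Sp F d'"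
    using avoid[OF Sp_finite[OF insert.hyps(1)], of m "m + \<delta>" d'] \<open>\<delta> > 0\<close> by auto
  define D where "D a = max (d' a q) m'" for a
  define e where "e a b = (if a = x then (if b = x then 0 else D b) else if b = x then D a else d' a b)" for a b
  have Dpos: "D a \<ge> m'" for a unfolding D_def by simp
  have DF: "D a \<le> max (d' a b) (D b)" if "a \<in> F" "b \<in> F" for a b
  proof -
    have "d' a q \<le> max (d' a b) (d' b q)" using ultra_ineq[OF d'(1) that q(1)] .
    then show ?thesis unfolding D_def by linarith
  qed
  have ultra: "ultrametric_space (insert x F) e"
  proof (rule ultraI)
    fix a b show "0 \<le> e a b" unfolding e_def D_def using ultra_nonneg[OF d'(1)] mpos m' by auto
  next
    fix a b show "e a b = e b a" unfolding e_def using ultra_commute[OF d'(1)] by auto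
  next
    fix a b assume ab: "a \<in> insert x F" "b \<in> insert x F"
    show "e a b = 0 \<longleftrightarrow> a = b"
    proof (cases "a = x \<or> b = x")
      case True then show ?thesis unfolding e_def using Dpos[of a] Dpos[of b] mpos m' by auto
    next
      case False then have "a \<in> F" "b \<in> F" using ab by auto
      then show ?thesis unfolding e_def using False ultra_zero[OF d'(1)] by auto
    qed
  next
    fix a b c assume abc: "a \<in> insert x F" "b \<in> insert x F" "c \<in> insert x F"
    show "e a c \<le> max (e a b) (e b c)"
    proof (cases "a = x")
      case ax: True
      show ?thesis
      proof (cases "b = x")
        case True then show ?thesis using ax by (simp add: e_def)
      next
        case bF: False
        show ?thesis
        proof (cases "c = x")
          case True then show ?thesis using ax bF mpos m'(1) by (simp add: e_def D_def)
        next
          case False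
          then have "c \<in> F" "b \<in> F" using abc bF by auto
          then have "D c \<le> max (d' c b) (D b)" by (rule DF)
          then show ?thesis using ax bF False ultra_commute[OF d'(1), of c b] by (simp add: e_def max.commute)
        qed
      qed
    next
      case aF: False
      show ?thesis
      proof (cases "b = x")
        case bx: True
        show ?thesis
        proof (cases "c = x")
          case True then show ?thesis using aF bx by (simp add: e_def D_def)
        next
          case False
          then have F2: "a \<in> F" "c \<in> F" using abc aF by auto
          have "d' a c \<le> max (d' a q) (d' q c)" using ultra_ineq[OF d'(1) F2(1) q(1) F2(2)] .
          then have "d' a c \<le> max (D a) (D c)" unfolding D_def using ultra_commute[OF d'(1), of q c] by linarith
          then show ?thesis using aF bx False by (simp add: e_def)
        qed
      next
        case bF: False
        show ?thesis
        proof (cases "c = x")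
          case True
          then have "a \<in> F" "b \<in> F" using abc aF bF by auto
          then have "D a \<le> max (d' a b) (D b)" by (rule DF)
          then show ?thesis using aF bF True by (simp add: e_def)
        next
          case False
          then have "a \<in> F" "b \<in> F" "c \<in> F" using abc aF bF by auto
          then show ?thesis using aF bF False ultra_ineq[OF d'(1)] by (simp add: e_def)
        qed
      qed
    qed
  qed
  have Dq: "D q = m'" unfolding D_def using ultra_zero[OF d'(1) q(1) q(1)] mpos m' by simp
  have DSp: "D a \<in> Sp F d' \<union> {m'}" if "a \<in> F" for a
  proof (cases "a = q")
    case True then show ?thesis using Dq by simp
  next
    case False
    then have "d' a q \<in> Sp F d'" unfolding Sp_def using that q(1) by blast
    then show ?thesis unfolding D_def by (cases "d' a q \<le> m'") (auto simp: max_def)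
  qed
  have SpE: "Sp (insert x F) e = Sp F d' \<union> {m'}"
  proof
    show "Sp (insert x F) e \<subseteq> Sp F d' \<union> {m'}"
    proof
      fix t assume "t \<in> Sp (insert x F) e"
      then obtain a b where ab: "t = e a b" "a \<in> insert x F" "b \<in> insert x F" "a \<noteq> b"
        unfolding Sp_def by blast
      show "t \<in> Sp F d' \<union> {m'}"
      proof (cases "a = x")
        case True then have "b \<in> F" using ab by auto
        then show ?thesis using ab True DSp[of b] by (simp add: e_def)
      next
        case aF: False
        then have "a \<in> F" using ab by auto
        show ?thesis
        proof (cases "b = x")
          case True then show ?thesis using ab aF DSp[OF \<open>a \<in> F\<close>] by (simp add: e_def)
        next
          case False
          then have "t = d' a b" using ab aF by (simp add: e_def)
          moreover have "b \<in> F" using ab False by auto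
          ultimately show ?thesis unfolding Sp_def using ab \<open>a \<in> F\<close> by blast
        qed
      qed
    qed
  next
    show "Sp F d' \<union> {m'} \<subseteq> Sp (insert x F) e"
    proof
      fix t assume "t \<in> Sp F d' \<union> {m'}"
      then show "t \<in> Sp (insert x F) e"
      proof
        assume "t \<in> Sp F d'"
        then obtain a b where ab: "t = d' a b" "a \<in> F" "b \<in> F" "a \<noteq> b" unfolding Sp_def by blast
        then have "t = e a b" using xF by (auto simp: e_def)
        then show ?thesis unfolding Sp_def using ab by blast
      next
        assume "t \<in> {m'}"
        then have "t = e x q" using Dq q(1) xF by (auto simp add: e_def)
        then show ?thesis unfolding Sp_def using q(1) xF by blast
      qed
    qed
  qed
  have card: "card (Sp (insert x F) e) + 1 = card (insert x F)"
    using SpE m'(3) d'(2) Sp_finite[OF insert.hyps(1)] insert.hyps(1) xF by simp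
  have key: "d c x \<le> D c \<and> D c \<le> d c x + \<delta>" if c: "c \<in> F" for c
  proof -
    have cq: "d c q \<le> d' c q \<and> d' c q \<le> d c q + \<delta>"
    proof (cases "c = q")
      case True
      have "d c q = 0" using ultra_zero[OF Ud, of c q] True c by auto
      moreover have "d' c q = 0" using ultra_zero[OF d'(1), of c q] True c by auto
      ultimately show ?thesis using \<open>\<delta>>0\<close> by simp
    next
      case False then show ?thesis using d'(3) c q(1) by blast
    qed
    have 1: "d c x \<le> max (d c q) (d q x)" using ultra_ineq[OF Ud, of c q x] c q(1) by simp
    have 2: "d c q \<le> max (d c x) (d x q)" using ultra_ineq[OF Ud, of c x q] c q(1) by simp
    have 3: "m \<le> d x c" using q(2)[OF c] unfolding m_def .
    have 4: "d q x = m" "d x c = d c x" unfolding m_def using ultra_commute[OF Ud] by auto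
    have 5: "d x q = m" unfolding m_def ..
    show ?thesis using 1 2 3 4 5 cq m'(1,2) unfolding D_def max_def by (auto split: if_split_asm)
  qed
  have bnd: "\<forall>a\<in>insert x F. \<forall>b\<in>insert x F. a \<noteq> b \<longrightarrow> d a b \<le> e a b \<and> e a b \<le> d a b + \<delta>"
  proof (intro ballI impI)
    fix a b assume that: "a \<in> insert x F" "b \<in> insert x F" "a \<noteq> b"
    show "d a b \<le> e a b \<and> e a b \<le> d a b + \<delta>"
    proof (cases "a = x")
      case True
      then have "b \<in> F" using that by auto
      then show ?thesis using key[of b] True that ultra_commute[OF Ud, of b a] by (simp add: e_def)
    next
      case aF: False
      show ?thesis
      proof (cases "b = x")
        case True
        then show ?thesis using key[of a] aF that by (simp add: e_def)
      next
        case False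
        then show ?thesis using aF that d'(3) by (simp add: e_def)
      qed
    qed
  qed
  show ?case using ultra card bnd by blast
qed

theorem theorem28:
  fixes Y :: "'a set" and dY :: "'a \<Rightarrow> 'a \<Rightarrow> real" and eps :: real
  assumes "ultrametric_space Y dY"
    and "compact_space (Metric_space.mtopology Y dY)"
    and "Y \<noteq> {}"
    and "eps > 0"
  shows "\<exists>(X :: nat set) dX. in_U X dX \<and> GH_less X dX Y dY eps"
proof -
  note UY = assms(1)
  have MY: "Metric_space Y dY" using assms(1) unfolding ultrametric_space_def by (rule conjunct1)
  interpret Metric_space Y dY by (rule MY)
  have tb: "mtotally_bounded Y" using assms(2) compact_space_eq_mcomplete_mtotally_bounded by blast
  define \<delta> where "\<delta> = eps / 2"
  have dpos: "\<delta> > 0" unfolding \<delta>_def using assms(4) by simp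
  obtain K where K: "finite K" "K \<subseteq> Y" "Y \<subseteq> (\<Union>x\<in>K. mball x \<delta>)"
    using tb[unfolded mtotally_bounded_def, rule_format, OF dpos] by (elim exE conjE)
  have Kne: "K \<noteq> {}"
  proof
    assume "K = {}"
    then have "Y \<subseteq> {}" using K(3) by simp
    then show False using assms(3) by simp
  qed
  have uK: "ultrametric_space K dY" using UY K(2) by (rule ultra_subset)
  obtain d' where d': "ultrametric_space K d'" "card (Sp K d') + 1 = card K"
    "\<forall>a\<in>K. \<forall>b\<in>K. a \<noteq> b \<longrightarrow> dY a b \<le> d' a b \<and> d' a b \<le> dY a b + \<delta>"
    using perturb[OF K(1) Kne uK dpos] by blast
  obtain h where h: "bij_betw h {0..<card K} K" using ex_bij_betw_nat_finite[OF K(1)] by blast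
  define X where "X = {0..<card K}"
  define dX where "dX i j = d' (h i) (h j)" for i j
  have hX: "h i \<in> K" if "i \<in> X" for i using h that unfolding X_def bij_betw_def by auto
  have hinj: "h i = h j \<longleftrightarrow> i = j" if "i \<in> X" "j \<in> X" for i j
    using h that unfolding X_def bij_betw_def inj_on_def by auto
  have B: "dY (h i) (h j) \<le> dX i j \<and> dX i j \<le> dY (h i) (h j) + \<delta>" if "i \<in> X" "j \<in> X" for i j
  proof (cases "i = j")
    case True
    then have "dY (h i) (h j) = 0" "dX i j = 0" unfolding dX_def
      using hX[OF that(1)] ultra_zero[OF d'(1)] K(2) by auto
    then show ?thesis using dpos by simp
  next
    case False
    then have "h i \<noteq> h j" using hinj[OF that] by simp
    then show ?thesis unfolding dX_def using d'(3) hX[OF that(1)] hX[OF that(2)] by simp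
  qed
  have uX: "ultrametric_space X dX"
  proof (rule ultraI)
    fix a b show "0 \<le> dX a b" unfolding dX_def by (rule ultra_nonneg[OF d'(1)])
    show "dX a b = dX b a" unfolding dX_def by (rule ultra_commute[OF d'(1)])
  next
    fix a b assume "a \<in> X" "b \<in> X"
    then show "dX a b = 0 \<longleftrightarrow> a = b" unfolding dX_def using ultra_zero[OF d'(1)] hX hinj by auto
  next
    fix a b c assume "a \<in> X" "b \<in> X" "c \<in> X"
    then show "dX a c \<le> max (dX a b) (dX b c)" unfolding dX_def using ultra_ineq[OF d'(1)] hX by auto
  qed
  have SpX: "Sp X dX = Sp K d'"
  proof
    show "Sp X dX \<subseteq> Sp K d'" unfolding Sp_def dX_def using hX hinj by blast
  next
    show "Sp K d' \<subseteq> Sp X dX"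
    proof
      fix t assume "t \<in> Sp K d'"
      then obtain a b where ab: "t = d' a b" "a \<in> K" "b \<in> K" "a \<noteq> b" unfolding Sp_def by blast
      have "K = h ` X" using h unfolding X_def bij_betw_def by auto
      then obtain i j where "i \<in> X" "j \<in> X" "a = h i" "b = h j" using ab by blast
      then show "t \<in> Sp X dX" unfolding Sp_def dX_def using ab by blast
    qed
  qed
  have cardX: "card X = card K" unfolding X_def by simp
  have inU: "in_U X dX" unfolding in_U_def
    using uX SpX cardX d'(2) Kne K(1) unfolding X_def by auto
  define Z :: "(nat + 'a) set" where "Z = Inl ` X \<union> Inr ` Y"
  define dZ where "dZ a b = (case a of Inl i \<Rightarrow> (case b of Inl j \<Rightarrow> dX i j | Inr y \<Rightarrow> dY (h i) y + \<delta>)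
        | Inr y \<Rightarrow> (case b of Inl j \<Rightarrow> dY (h j) y + \<delta> | Inr y' \<Rightarrow> dY y y'))" for a b
  have hY: "h i \<in> Y" if "i \<in> X" for i using hX[OF that] K(2) by auto
  have XT: "dX i k \<le> dX i j + dX j k" if "i \<in> X" "j \<in> X" "k \<in> X" for i j k
  proof -
    have "dX i k \<le> max (dX i j) (dX j k)" using ultra_ineq[OF uX that] .
    moreover have "0 \<le> dX i j" "0 \<le> dX j k" using ultra_nonneg[OF uX] by auto
    ultimately show ?thesis by linarith
  qed
  have XC: "dX i j = dX j i" for i j using ultra_commute[OF uX] .
  have MZ: "Metric_space Z dZ"
  proof
    fix a b show "0 \<le> dZ a b" unfolding dZ_def using ultra_nonneg[OF uX] dpos
      by (cases a; cases b) (auto intro: add_nonneg_nonneg)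
  next
    fix a b show "dZ a b = dZ b a" unfolding dZ_def using XC commute by (cases a; cases b) auto
  next
    fix a b assume "a \<in> Z" "b \<in> Z"
    then show "dZ a b = 0 \<longleftrightarrow> a = b" unfolding dZ_def Z_def using ultra_zero[OF uX] dpos nonneg
      by (cases a; cases b) (auto, smt (verit) nonneg, smt (verit) nonneg)
  next
    fix a b c assume abc: "a \<in> Z" "b \<in> Z" "c \<in> Z"
    show "dZ a c \<le> dZ a b + dZ b c"
    proof (cases a)
      case (Inl i)
      then have i: "i \<in> X" using abc unfolding Z_def by auto
      show ?thesis
      proof (cases b)
        case (Inl j)
        then have j: "j \<in> X" using abc unfolding Z_def by auto
        show ?thesis
        proof (cases c)
          case (Inl k)
          then have k: "k \<in> X" using abc unfolding Z_def by auto
          show ?thesis using XT[OF i j k] \<open>a = Inl i\<close> \<open>b = Inl j\<close> Inl by (simp add: dZ_def)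
        next
          case (Inr y)
          then have y: "y \<in> Y" using abc unfolding Z_def by auto
          have "dY (h i) y \<le> dY (h i) (h j) + dY (h j) y" using triangle[OF hY[OF i] hY[OF j] y] .
          then show ?thesis using B[OF i j] \<open>a = Inl i\<close> \<open>b = Inl j\<close> Inr by (simp add: dZ_def)
        qed
      next
        case (Inr y)
        then have y: "y \<in> Y" using abc unfolding Z_def by auto
        show ?thesis
        proof (cases c)
          case (Inl k)
          then have k: "k \<in> X" using abc unfolding Z_def by auto
          have "dY (h i) (h k) \<le> dY (h i) y + dY y (h k)" using triangle[OF hY[OF i] y hY[OF k]] .
          then show ?thesis using B[OF i k] \<open>a = Inl i\<close> \<open>b = Inr y\<close> Inl commute[of y "h k"] dpos
            by (simp add: dZ_def)
        next
          case (Inr y')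
          then have y': "y' \<in> Y" using abc unfolding Z_def by auto
          have "dY (h i) y' \<le> dY (h i) y + dY y y'" using triangle[OF hY[OF i] y y'] .
          then show ?thesis using \<open>a = Inl i\<close> \<open>b = Inr y\<close> Inr by (simp add: dZ_def)
        qed
      qed
    next
      case (Inr y)
      then have y: "y \<in> Y" using abc unfolding Z_def by auto
      show ?thesis
      proof (cases b)
        case (Inl j)
        then have j: "j \<in> X" using abc unfolding Z_def by auto
        show ?thesis
        proof (cases c)
          case (Inl k)
          then have k: "k \<in> X" using abc unfolding Z_def by auto
          have "dY y (h k) \<le> dY y (h j) + dY (h j) (h k)" using triangle[OF y hY[OF j] hY[OF k]] .
          then show ?thesis using B[OF j k] \<open>a = Inr y\<close> \<open>b = Inl j\<close> Inl commute[of y "h k"] commute[of y "h j"]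
            by (simp add: dZ_def)
        next
          case (Inr y')
          then have y': "y' \<in> Y" using abc unfolding Z_def by auto
          have "dY y y' \<le> dY y (h j) + dY (h j) y'" using triangle[OF y hY[OF j] y'] .
          then show ?thesis using \<open>a = Inr y\<close> \<open>b = Inl j\<close> Inr commute[of y "h j"] dpos by (simp add: dZ_def)
        qed
      next
        case (Inr y')
        then have y': "y' \<in> Y" using abc unfolding Z_def by auto
        show ?thesis
        proof (cases c)
          case (Inl k)
          then have k: "k \<in> X" using abc unfolding Z_def by auto
          have "dY y (h k) \<le> dY y y' + dY y' (h k)" using triangle[OF y y' hY[OF k]] .
          then show ?thesis using \<open>a = Inr y\<close> \<open>b = Inr y'\<close> Inl commute[of y "h k"] commute[of y' "h k"]
            by (simp add: dZ_def)
        next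
          case (Inr y'')
          then have y'': "y'' \<in> Y" using abc unfolding Z_def by auto
          show ?thesis using triangle[OF y y' y''] \<open>a = Inr y\<close> \<open>b = Inr y'\<close> Inr by (simp add: dZ_def)
        qed
      qed
    qed
  qed
  have isoX: "isometric_spaces X dX (Inl ` X) dZ"
    unfolding isometric_spaces_def
    by (rule exI[of _ Inl]) (auto simp: bij_betw_def inj_on_def dZ_def)
  have isoY: "isometric_spaces Y dY (Inr ` Y) dZ"
    unfolding isometric_spaces_def
    by (rule exI[of _ Inr]) (auto simp: bij_betw_def inj_on_def dZ_def)
  have cov1: "\<forall>x\<in>Inl ` X. \<exists>y\<in>Inr ` Y. dZ y x < eps"
  proof
    fix x :: "nat + 'a" assume "x \<in> Inl ` X"
    then obtain i where i: "i \<in> X" "x = Inl i" by blast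
    have "dZ (Inr (h i)) x = \<delta>" using i hY[OF i(1)] by (simp add: dZ_def)
    moreover have "\<delta> < eps" unfolding \<delta>_def using assms(4) by simp
    ultimately show "\<exists>y\<in>Inr ` Y. dZ y x < eps" using hY[OF i(1)] by force
  qed
  have cov2: "\<forall>y\<in>Inr ` Y. \<exists>x\<in>Inl ` X. dZ x y < eps"
  proof
    fix y :: "nat + 'a" assume "y \<in> Inr ` Y"
    then obtain u where u: "u \<in> Y" "y = Inr u" by blast
    then obtain s where s: "s \<in> K" "dY s u < \<delta>" using K(3) by auto
    have "K = h ` X" using h unfolding X_def bij_betw_def by auto
    then obtain i where i: "i \<in> X" "s = h i" using s by blast
    have "dZ (Inl i) y = dY s u + \<delta>" using u i by (simp add: dZ_def)
    also have "\<dots> < eps" using s(2) unfolding \<delta>_def by simp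
    finally show "\<exists>x\<in>Inl ` X. dZ x y < eps" using i by blast
  qed
  have "GH_less X dX Y dY eps" unfolding GH_less_def
    apply (rule exI[of _ Z], rule exI[of _ dZ], rule exI[of _ "Inl ` X"], rule exI[of _ "Inr ` Y"])
    using MZ isoX isoY cov1 cov2 unfolding Z_def by blast
  then show ?thesis using inU by blast
qed

end
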